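(* Let $p$ be a prime greater than $3$ and let $x$ be an indeterminate. Then $$\sum_{k=0}^{[p/3]}\frac{(3k)!}{27^k\,k!^3}\big(x^k-(-1)^{[p/3]}(1-x)^k\big)\equiv0\pmod p.$$
   Context: $[y]$ is the greatest integer not exceeding $y$. The congruence is coefficientwise for polynomials with rational coefficients having denominators prime to $p$. *)

theory Defs
  imports "HOL-Computational_Algebra.Polynomial" "HOL-Computational_Algebra.Primes"
begin

definition rat_cong0 :: "nat \<Rightarrow> rat \<Rightarrow> bool" where
  "rat_cong0 p q \<longleftrightarrow> (\<exists>n d::int. d \<noteq> 0 \<and> \<not> int p dvd d \<and> int p dvd n \<and> q = of_int n / of_int d)"

definition poly_cong0 :: "nat \<Rightarrow> rat poly \<Rightarrow> bool" where
  "poly_cong0 p P \<longleftrightarrow> (\<forall>i. rat_cong0 p (coeff P i))"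

end

theory Submission
  imports Defs
begin

lemma bin_rec: "Suc k * (n choose Suc k) = (n - k) * (n choose k)"
  using binomial_absorb_comp binomial_absorption by presburger

lemma coeffY: "coeff ([:1, -1:] ^ k) j = ((-1)^j * of_nat (k choose j) :: 'a::comm_ring_1)"
proof (induction k arbitrary: j)
  case 0 then show ?case by (cases j) simp_all
next
  case (Suc k)
  show ?case
  proof (cases j)
    case 0 then show ?thesis using Suc by simp
  next
    case (Suc i)
    then show ?thesis using Suc.IH by (simp add: algebra_simps coeff_pCons)
  qed
qed

definition zp :: "nat \<Rightarrow> rat \<Rightarrow> bool" where
  "zp p q \<longleftrightarrow> (\<exists>n d::int. d \<noteq> 0 \<and> \<not> int p dvd d \<and> q = of_int n / of_int d)"

lemma zp_int: "prime p \<Longrightarrow> zp p (of_int a)"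
  unfolding zp_def by (rule exI[of _ a], rule exI[of _ 1]) (auto simp: zdvd1_eq prime_gt_1_nat)

lemma zp_inv: "d \<noteq> 0 \<Longrightarrow> \<not> int p dvd d \<Longrightarrow> zp p (1 / of_int d)"
  unfolding zp_def by (rule exI[of _ 1], rule exI[of _ d]) auto

lemma nd_mult: assumes "prime p" "\<not> int p dvd a" "\<not> int p dvd b" shows "\<not> int p dvd a * b"
proof -
  have "prime (int p)" using assms by simp
  then show ?thesis using assms prime_dvd_mult_iff by blast
qed

lemma zp_mult: assumes "prime p" "zp p x" "zp p y" shows "zp p (x * y)"
proof -
  obtain a b c d where "b \<noteq> 0" "\<not> int p dvd b" "x = of_int a / of_int b"
     "d \<noteq> 0" "\<not> int p dvd d" "y = of_int c / of_int d" using assms unfolding zp_def by blast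
  then show ?thesis unfolding zp_def
    by (intro exI[of _ "a*c"] exI[of _ "b*d"]) (auto simp: nd_mult assms)
qed

lemma cong0_mult: assumes "prime p" "rat_cong0 p x" "zp p y" shows "rat_cong0 p (x * y)"
proof -
  obtain a b c d where "b \<noteq> 0" "\<not> int p dvd b" "x = of_int a / of_int b" "int p dvd a"
     "d \<noteq> 0" "\<not> int p dvd d" "y = of_int c / of_int d" using assms unfolding zp_def rat_cong0_def by blast
  then show ?thesis unfolding rat_cong0_def
    by (intro exI[of _ "a*c"] exI[of _ "b*d"]) (auto simp: nd_mult assms)
qed

lemma cong0_add: assumes "prime p" "rat_cong0 p x" "rat_cong0 p y" shows "rat_cong0 p (x + y)"
proof -
  obtain a b c d where "b \<noteq> 0" "\<not> int p dvd b" "x = of_int a / of_int b" "int p dvd a"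
     "d \<noteq> 0" "\<not> int p dvd d" "y = of_int c / of_int d" "int p dvd c" using assms unfolding rat_cong0_def by blast
  then show ?thesis unfolding rat_cong0_def
    by (intro exI[of _ "a*d + c*b"] exI[of _ "b*d"]) (auto simp: nd_mult assms field_simps)
qed

lemma cong0_neg: "rat_cong0 p x \<Longrightarrow> rat_cong0 p (- x)"
  unfolding rat_cong0_def by (metis dvd_minus_iff minus_divide_left of_int_minus)

lemma cong0_diff: "prime p \<Longrightarrow> rat_cong0 p x \<Longrightarrow> rat_cong0 p y \<Longrightarrow> rat_cong0 p (x - y)"
  using cong0_add[of p x "-y"] cong0_neg by simp

lemma cong0_int: "prime p \<Longrightarrow> int p dvd a \<Longrightarrow> rat_cong0 p (of_int a)"
  unfolding rat_cong0_def by (rule exI[of _ a], rule exI[of _ 1]) (auto simp: zdvd1_eq prime_gt_1_nat)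

lemma cong0_0: "prime p \<Longrightarrow> rat_cong0 p 0"
  using cong0_int[of p 0] by auto

lemma cong0_sum: "prime p \<Longrightarrow> (\<And>k. k \<in> A \<Longrightarrow> rat_cong0 p (f k)) \<Longrightarrow> rat_cong0 p (sum f A)"
  by (induction A rule: infinite_finite_induct) (auto simp: cong0_0 cong0_add)


lemma binom_neg:
  assumes p: "prime p" shows "a + b \<le> p - 1 \<Longrightarrow>
    int p dvd (int ((p - 1 - a) choose b) - (-1)^b * int ((a + b) choose b))"
proof (induction b)
  case 0 then show ?case by simp
next
  case (Suc b)
  define X where "X = int ((p - 1 - a) choose b)"
  define Y where "Y = int ((a + b) choose b)"
  define X' where "X' = int ((p - 1 - a) choose Suc b)"
  define Y' where "Y' = int ((a + Suc b) choose Suc b)"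
  have IH: "int p dvd (X - (-1)^b * Y)" using Suc by (simp add: X_def Y_def)
  have e1: "int (Suc b) * X' = (int p - 1 - int a - int b) * X"
  proof -
    have "Suc b * ((p - 1 - a) choose Suc b) = (p - 1 - a - b) * ((p - 1 - a) choose b)"
      by (rule bin_rec)
    then have "int (Suc b * ((p - 1 - a) choose Suc b)) = int ((p - 1 - a - b) * ((p - 1 - a) choose b))"
      by simp
    moreover have "int (p - 1 - a - b) = int p - 1 - int a - int b"
      using Suc.prems prime_gt_1_nat[OF p] by linarith
    ultimately show ?thesis unfolding X_def X'_def
      by (metis of_nat_mult)
  qed
  have e2: "int (Suc b) * Y' = (int a + int b + 1) * Y"
  proof -
    have "Suc b * (Suc (a + b) choose Suc b) = Suc (a+b) * ((a+b) choose b)"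
      by (rule Suc_times_binomial)
    then show ?thesis unfolding Y_def Y'_def
      by (metis add_Suc_right of_nat_Suc of_nat_add of_nat_mult add.commute)
  qed
  have "int (Suc b) * (X' - (-1)^Suc b * Y') = int (Suc b) * X' + (-1)^b * (int (Suc b) * Y')"
    by (simp add: algebra_simps)
  also have "\<dots> = (int p - 1 - int a - int b) * X + (-1)^b * ((int a + int b + 1) * Y)"
    by (simp only: e1 e2)
  also have "\<dots> = (int p - 1 - int a - int b) * (X - (-1)^b * Y) + int p * ((-1)^b * Y)"
    by (simp add: algebra_simps)
  finally have "int (Suc b) * (X' - (-1)^Suc b * Y') = (int p - 1 - int a - int b) * (X - (-1)^b * Y) + int p * ((-1)^b * Y)" .
  then have d: "int p dvd int (Suc b) * (X' - (-1)^Suc b * Y')"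
    using IH by (metis dvd_add dvd_mult dvd_triv_left)
  have "\<not> int p dvd int (Suc b)"
  proof
    assume "int p dvd int (Suc b)"
    then have "p dvd Suc b" using int_dvd_int_iff by blast
    then have "p \<le> Suc b" by (rule dvd_imp_le) simp
    then show False using Suc.prems prime_gt_1_nat[OF p] by linarith
  qed
  then have "int p dvd (X' - (-1)^Suc b * Y')"
    using d p prime_dvd_mult_iff[of "int p"] by auto
  then show ?case unfolding X'_def Y'_def by simp
qed

lemma sum_ident:
  assumes "j \<le> n" "n \<le> m"
  shows "(\<Sum>k=0..n. (n choose k) * (m choose k) * (k choose j)) = (n choose j) * ((m + n - j) choose n)"
proof -
  have "(\<Sum>k=0..n. (n choose k) * (m choose k) * (k choose j)) = (\<Sum>k=j..n. (n choose k) * (m choose k) * (k choose j))"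
    by (rule sum.mono_neutral_right) (use assms in auto)
  also have "\<dots> = (\<Sum>t=0..n-j. (n choose (t+j)) * (m choose (t+j)) * ((t+j) choose j))"
    using sum.shift_bounds_cl_nat_ivl[of "\<lambda>k. (n choose k) * (m choose k) * (k choose j)" 0 j "n-j"] assms
    by simp
  also have "\<dots> = (\<Sum>t=0..n-j. (n choose j) * (((n-j) choose t) * (m choose ((m-j) - t))))"
  proof (rule sum.cong[OF refl])
    fix t assume t: "t \<in> {0..n-j}"
    have "(n choose (t+j)) * ((t+j) choose j) = (n choose j) * ((n-j) choose t)"
      using choose_mult[of j "t+j" n] t assms by simp
    moreover have "m choose (t+j) = m choose ((m-j) - t)"
      using binomial_symmetric[of "t+j" m] t assms by (simp add: diff_diff_add add.commute)
    ultimately show "(n choose (t+j)) * (m choose (t+j)) * ((t+j) choose j) = (n choose j) * (((n-j) choose t) * (m choose ((m-j) - t)))"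
      by (metis mult.commute mult.left_commute)
  qed
  also have "\<dots> = (n choose j) * (\<Sum>t\<le>m-j. ((n-j) choose t) * (m choose ((m-j) - t)))"
  proof -
    have "(\<Sum>t=0..n-j. ((n-j) choose t) * (m choose ((m-j) - t))) = (\<Sum>t\<le>m-j. ((n-j) choose t) * (m choose ((m-j) - t)))"
      by (rule sum.mono_neutral_left) (use assms in auto)
    then show ?thesis by (simp only: sum_distrib_left[symmetric])
  qed
  also have "\<dots> = (n choose j) * ((n - j + m) choose (m - j))"
    using vandermonde[of "n-j" m "m-j"] by (simp add: diff_diff_add)
  also have "(n - j + m) choose (m - j) = (m + n - j) choose n"
    using binomial_symmetric[of "m-j" "n-j+m"] assms by (simp add: algebra_simps)
  finally show ?thesis .
qed

lemma aux2: fixes x a b a' b' u v :: int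
  shows "x * a' * (x * b') = u * a * (v * b) \<Longrightarrow> (a' * b') * x^2 = (a * b) * (u * v)"
  by (simp add: power2_eq_square algebra_simps)
lemma aux3: fixes x x' y y' D R S :: rat
  assumes "x' * D = x * R" "y' * D = y * S" "D \<noteq> 0"
  shows "x' - y' = ((x - y) * R) * (1 / D) + (y * (R - S)) / D"
proof -
  have "x' = x * R / D" "y' = y * S / D" using assms by (simp_all add: field_simps)
  then show ?thesis using assms(3) by (simp add: field_simps)
qed
lemma aux: fixes F G K T :: rat assumes "G \<noteq> 0" "K \<noteq> 0" "T \<noteq> 0"
  shows "F * ((3*K-2)*(3*K-1)*(3*K)) / (T*27*(G*K)^3) * (9*K^2) = F/(T*G^3) * ((3*K-2)*(3*K-1))"
  using assms by (simp add: field_simps power2_eq_square power3_eq_cube)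

lemma not_dvd_small: assumes "prime p" "0 < x" "x < p" shows "\<not> int p dvd int x"
proof
  assume "int p dvd int x" then have "p dvd x" using int_dvd_int_iff by blast
  then have "p \<le> x" using assms by (simp add: dvd_imp_le)
  then show False using assms by simp
qed

lemma ab_cong:
  fixes p n m :: nat
  assumes p: "prime p" "p > 3" and nm: "n \<le> m" "n < p"
    and hN: "\<And>k. k < n \<Longrightarrow> int p dvd ((3*int k+1)*(3*int k+2) - 9*(int n - int k)*(int m - int k))"
  shows "k \<le> n \<Longrightarrow> rat_cong0 p (of_nat (fact (3*k)) / (27 ^ k * of_nat (fact k) ^ 3)
            - of_nat ((n choose k) * (m choose k)))"
proof (induction k)
  case 0 then show ?case using cong0_0[OF p(1)] by simp
next
  case (Suc k)
  define a where "a = (\<lambda>k. of_nat (fact (3*k)) / (27 ^ k * of_nat (fact k) ^ 3) :: rat)"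
  define B where "B = (\<lambda>k. int ((n choose k) * (m choose k)))"
  have kn: "k < n" using Suc.prems by simp
  have IH: "rat_cong0 p (a k - of_int (B k))" using Suc kn unfolding a_def B_def by simp
  define D where "D = 9 * (int k + 1)^2"
  define R where "R = (3*int k+1)*(3*int k+2)"
  define N where "N = R - 9*(int n - int k)*(int m - int k)"
  have Dpos: "D \<noteq> 0" unfolding D_def by simp
  have ha: "a (Suc k) * of_int D = a k * of_int R"
  proof -
    have e3: "3 * Suc k = Suc (Suc (Suc (3*k)))" by simp
    have f3: "fact (3 * Suc k) = (fact (3*k) :: nat) * ((3*k+1)*(3*k+2)*(3*k+3))"
      unfolding e3 fact_Suc by (simp add: algebra_simps)
    define K :: rat where "K = of_nat k + 1"
    define F :: rat where "F = of_nat (fact (3*k))"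
    define G :: rat where "G = of_nat (fact k)"
    have F3: "(of_nat (fact (3 * Suc k)) :: rat) = F * ((3*K-2)*(3*K-1)*(3*K))"
      unfolding f3 F_def K_def by (simp add: algebra_simps)
    have F1: "(of_nat (fact (Suc k)) :: rat) = G * K"
      unfolding G_def K_def by (simp add: fact_Suc algebra_simps)
    have G: "G \<noteq> 0" unfolding G_def by simp
    have K: "K \<noteq> 0" unfolding K_def by (metis of_nat_Suc of_nat_eq_0_iff nat.distinct(1) add.commute)
    have T: "(27::rat)^k \<noteq> 0" by simp
    have "a (Suc k) * of_int D = F * ((3*K-2)*(3*K-1)*(3*K)) / (27^k*27*(G*K)^3) * (9*K^2)"
      unfolding a_def F3 F1 D_def K_def by (simp add: power_Suc2)
    also have "\<dots> = F/(27^k*G^3) * ((3*K-2)*(3*K-1))" by (rule aux[OF G K T])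
    also have "\<dots> = a k * of_int R" unfolding a_def F_def G_def R_def K_def by (simp add: algebra_simps)
    finally show ?thesis .
  qed
  have hb: "B (Suc k) * (int k + 1)^2 = B k * ((int n - int k)*(int m - int k))"
  proof -
    have "Suc k * (n choose Suc k) = (n - k) * (n choose k)" by (rule bin_rec)
    moreover have "Suc k * (m choose Suc k) = (m - k) * (m choose k)" by (rule bin_rec)
    ultimately have "(Suc k * (n choose Suc k)) * (Suc k * (m choose Suc k)) = ((n - k) * (n choose k)) * ((m - k) * (m choose k))"
      by simp
    then have "int ((Suc k * (n choose Suc k)) * (Suc k * (m choose Suc k))) = int (((n - k) * (n choose k)) * ((m - k) * (m choose k)))"
      by simp
    moreover have "int (n - k) = int n - int k" "int (m - k) = int m - int k" using kn nm by auto
    ultimately have "(int k + 1) * int (n choose Suc k) * ((int k + 1) * int (m choose Suc k)) = (int n - int k) * int (n choose k) * ((int m - int k) * int (m choose k))"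
      by (simp only: of_nat_mult of_nat_Suc add.commute[of 1])
    then show ?thesis unfolding B_def of_nat_mult by (rule aux2)
  qed
  have "a (Suc k) - of_int (B (Suc k)) = ((a k - of_int (B k)) * of_int R) * (1 / of_int D) + of_int (B k * N) / of_int D"
  proof -
    have "B (Suc k) * D = B k * (9 * ((int n - int k)*(int m - int k)))"
      unfolding D_def using hb by (simp add: algebra_simps)
    then have hb': "of_int (B (Suc k)) * of_int D = (of_int (B k) * of_int (9 * ((int n - int k)*(int m - int k))) :: rat)"
      by (metis of_int_mult)
    have "of_int N = (of_int R - of_int (9 * ((int n - int k)*(int m - int k))) :: rat)"
      unfolding N_def by simp
    then show ?thesis using aux3[OF ha hb'] Dpos by simp
  qed
  moreover have "rat_cong0 p (((a k - of_int (B k)) * of_int R) * (1 / of_int D))"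
  proof -
    have ndD: "\<not> int p dvd D"
    proof -
      have n3: "\<not> int p dvd 3" using not_dvd_small[OF p(1), of 3] p by simp
      have nk: "\<not> int p dvd (int k + 1)" using not_dvd_small[OF p(1), of "k+1"] kn nm by (simp add: add.commute)
      have "\<not> int p dvd 3 * 3 * ((int k + 1) * (int k + 1))"
        using nd_mult[OF p(1)] n3 nk by blast
      then show ?thesis unfolding D_def by (simp add: power2_eq_square)
    qed
    show ?thesis
      by (intro cong0_mult[OF p(1)] IH zp_int[OF p(1)] zp_inv[OF Dpos ndD])
  qed
  moreover have "rat_cong0 p (of_int (B k * N) / of_int D)"
  proof -
    have ndD: "\<not> int p dvd D"
    proof -
      have n3: "\<not> int p dvd 3" using not_dvd_small[OF p(1), of 3] p by simp
      have nk: "\<not> int p dvd (int k + 1)" using not_dvd_small[OF p(1), of "k+1"] kn nm by (simp add: add.commute)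
      have "\<not> int p dvd 3 * 3 * ((int k + 1) * (int k + 1))"
        using nd_mult[OF p(1)] n3 nk by blast
      then show ?thesis unfolding D_def by (simp add: power2_eq_square)
    qed
    have "int p dvd B k * N" using hN[OF kn] unfolding N_def R_def by simp
    then show ?thesis unfolding rat_cong0_def using Dpos ndD by blast
  qed
  ultimately have "rat_cong0 p (a (Suc k) - of_int (B (Suc k)))"
    using cong0_add[OF p(1)] by simp
  then show ?case unfolding a_def B_def by simp
qed


lemma int_part:
  fixes p n m j :: nat
  assumes p: "prime p" and nm: "n \<le> m" "m + n = p - 1" "j \<le> n"
  shows "int p dvd (int ((n choose j) * (m choose j)) - (-1)^n * (-1)^j * int (\<Sum>k=0..n. (n choose k) * (m choose k) * (k choose j)))"
proof -
  have s: "(\<Sum>k=0..n. (n choose k) * (m choose k) * (k choose j)) = (n choose j) * ((p - 1 - j) choose n)"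
    using sum_ident[OF nm(3) nm(1)] nm(2) by simp
  have m: "m = p - 1 - n" using nm by simp
  define Y where "Y = int ((n + j) choose j)"
  have Y2: "Y = int ((j + n) choose n)"
    unfolding Y_def using binomial_symmetric[of j "n+j"] by (simp add: add.commute)
  have d1: "int p dvd (int (m choose j) - (-1)^j * Y)"
    unfolding Y_def m using binom_neg[OF p, of n j] nm by simp
  have d2: "int p dvd (int ((p - 1 - j) choose n) - (-1)^n * Y)"
    unfolding Y2 using binom_neg[OF p, of j n] nm by simp
  have sq: "((-1::int)^n * (-1)^j) * (-1)^n = (-1)^j"
  proof -
    have "((-1::int)^n * (-1)^j) * (-1)^n = ((-1)^n * (-1)^n) * (-1)^j" by (simp add: algebra_simps)
    also have "(-1::int)^n * (-1)^n = 1" by (simp add: power_add[symmetric])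
    finally show ?thesis by simp
  qed
  have "int ((n choose j) * (m choose j)) - (-1)^n * (-1)^j * int ((n choose j) * ((p - 1 - j) choose n))
     = int (n choose j) * ((int (m choose j) - (-1)^j * Y) - ((-1)^n * (-1)^j) * (int ((p - 1 - j) choose n) - (-1)^n * Y))"
  proof -
    have "((-1)^n * (-1)^j) * ((-1)^n * Y) = (-1::int)^j * Y" using sq by (metis mult.assoc)
    then show ?thesis by (simp add: algebra_simps)
  qed
  moreover have "int p dvd int (n choose j) * ((int (m choose j) - (-1)^j * Y) - ((-1)^n * (-1)^j) * (int ((p - 1 - j) choose n) - (-1)^n * Y))"
    by (rule dvd_mult, rule dvd_diff[OF d1 dvd_mult[OF d2]])
  ultimately show ?thesis unfolding s by simp
qed


lemma mif: "(x::int) * (y * (if P then 1 else 0)) = (if P then x * y else 0)" by simp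

theorem theorem2p4:
  fixes p :: nat
  assumes "prime p" and "p > 3"
  shows "poly_cong0 p
    (\<Sum>k = 0..p div 3.
       smult (of_nat (fact (3*k)) / (27 ^ k * of_nat (fact k) ^ 3))
         ([:0, 1:] ^ k - smult ((-1) ^ (p div 3)) ([:1, -1:] ^ k)))"
proof -
  note p = assms
  define n where "n = p div 3"
  define m where "m = p - 1 - n"
  have cases3: "p = 3*n+1 \<or> p = 3*n+2"
  proof -
    have "p mod 3 \<noteq> 0"
    proof
      assume "p mod 3 = 0"
      then have "3 dvd p" by auto
      then have "3 = p" using p(1) unfolding prime_nat_iff by force
      then show False using p by simp
    qed
    then show ?thesis unfolding n_def by presburger
  qed
  have nm: "n \<le> m" "m + n = p - 1" "n < p" unfolding m_def using cases3 by auto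
  have hN: "\<And>k. k < n \<Longrightarrow> int p dvd ((3*int k+1)*(3*int k+2) - 9*(int n - int k)*(int m - int k))"
  proof -
    fix k assume "k < n"
    show "int p dvd ((3*int k+1)*(3*int k+2) - 9*(int n - int k)*(int m - int k))"
      using cases3
    proof
      assume h: "p = 3*n+1"
      then have "int m = 2 * int n" unfolding m_def by simp
      moreover have "int p = 3 * int n + 1" using h by simp
      ultimately show ?thesis
        by (intro dvdI[of _ _ "-(6 * int n - 2 - 9 * int k)"]) (simp add: algebra_simps)
    next
      assume h: "p = 3*n+2"
      then have "int m = 2 * int n + 1" unfolding m_def by simp
      moreover have "int p = 3 * int n + 2" using h by simp
      ultimately show ?thesis
        by (intro dvdI[of _ _ "-(6 * int n - 1 - 9 * int k)"]) (simp add: algebra_simps)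
    qed
  qed
  define a where "a = (\<lambda>k. of_nat (fact (3*k)) / (27 ^ k * of_nat (fact k) ^ 3) :: rat)"
  define B where "B = (\<lambda>k. int ((n choose k) * (m choose k)))"
  have AB: "\<And>k. k \<le> n \<Longrightarrow> rat_cong0 p (a k - of_int (B k))"
    using ab_cong[OF p nm(1) nm(3) hN] unfolding a_def B_def by simp
  show ?thesis unfolding poly_cong0_def
  proof
    fix j
    define e where "e = (\<lambda>k. (if j = k then 1 else 0) - (-1)^n * ((-1)^j * int (k choose j)))"
    have X: "\<And>k. ([:0, 1:] ^ k :: rat poly) = monom 1 k" using monom_altdef[of "1::rat"] by simp
    have "coeff (\<Sum>k = 0..p div 3.
       smult (of_nat (fact (3*k)) / (27 ^ k * of_nat (fact k) ^ 3))
         ([:0, 1:] ^ k - smult ((-1) ^ (p div 3)) ([:1, -1:] ^ k))) j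
       = (\<Sum>k=0..n. a k * of_int (e k))"
      unfolding coeff_sum n_def[symmetric]
    proof (rule sum.cong[OF refl])
      fix k
      show "coeff (smult (of_nat (fact (3*k)) / (27 ^ k * of_nat (fact k) ^ 3))
         ([:0, 1:] ^ k - smult ((-1) ^ n) ([:1, -1:] ^ k))) j = a k * of_int (e k)"
        unfolding a_def e_def X by (simp add: coeff_monom coeffY)
    qed
    also have "\<dots> = (\<Sum>k=0..n. (a k - of_int (B k)) * of_int (e k)) + of_int (\<Sum>k=0..n. B k * e k)"
      by (simp add: sum.distrib[symmetric] algebra_simps)
    finally have eq: "coeff (\<Sum>k = 0..p div 3.
       smult (of_nat (fact (3*k)) / (27 ^ k * of_nat (fact k) ^ 3))
         ([:0, 1:] ^ k - smult ((-1) ^ (p div 3)) ([:1, -1:] ^ k))) j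
       = (\<Sum>k=0..n. (a k - of_int (B k)) * of_int (e k)) + of_int (\<Sum>k=0..n. B k * e k)" .
    have c1: "rat_cong0 p (\<Sum>k=0..n. (a k - of_int (B k)) * of_int (e k))"
      by (rule cong0_sum[OF p(1)]) (auto intro: cong0_mult[OF p(1)] AB zp_int[OF p(1)])
    have S: "(\<Sum>k=0..n. B k * e k) = (if j \<le> n then B j else 0) - (-1)^n * (-1)^j * int (\<Sum>k=0..n. (n choose k) * (m choose k) * (k choose j))"
      unfolding e_def B_def by (simp add: algebra_simps sum_subtractf sum_distrib_left mif sum.delta)
    have c2: "int p dvd (\<Sum>k=0..n. B k * e k)"
    proof (cases "j \<le> n")
      case True
      then show ?thesis unfolding S unfolding B_def using int_part[OF p(1) nm(1) nm(2) True] by simp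
    next
      case False
      have z: "(\<Sum>k=0..n. (n choose k) * (m choose k) * (k choose j)) = 0" using False by simp
      show ?thesis unfolding S z using False by simp
    qed
    show "rat_cong0 p (coeff (\<Sum>k = 0..p div 3.
       smult (of_nat (fact (3*k)) / (27 ^ k * of_nat (fact k) ^ 3))
         ([:0, 1:] ^ k - smult ((-1) ^ (p div 3)) ([:1, -1:] ^ k))) j)"
      unfolding eq by (rule cong0_add[OF p(1) c1 cong0_int[OF p(1) c2]])
  qed
qed

end
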